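(* Let $G\in\mathcal{C}$ and let $C$ be a minimal separator of $G$ that is not a clique. Then $G\setminus C$ has exactly two full components for $C$.
   Context: All graphs are finite and simple; paths are induced paths; a hole is an induced cycle of length at least four. $\mathcal{C}$ is the class of graphs containing no theta, pyramid, prism or turtle as an induced subgraph, where: a theta consists of two nonadjacent vertices $a,b$ and three paths from $a$ to $b$, otherwise vertex-disjoint, any two of which induce a hole; a pyramid consists of a vertex $a$, a triangle $\{b_1,b_2,b_3\}$ and paths $P_i$ from $a$ to $b_i$, pairwise disjoint except at $a$, any two of which induce a hole; a prism consists of two disjoint triangles $\{a_1,a_2,a_3\},\{b_1,b_2,b_3\}$ and pairwise disjoint paths $P_i$ from $a_i$ to $b_i$, any two of which induce a hole; a turtle consists of disjoint paths $P_1$ (from $a_1$ to $b_1$), $P_2$ (from $a_2$ to $b_2$) with $a_1a_2,b_1b_2$ edges and $V(P_1)\cup V(P_2)$ inducing a hole, plus adjacent vertices $x,y$ where $x$ has at least three neighbors in $P_1$ and none in $P_2$, and $y$ has at least three neighbors in $P_2$ and none in $P_1$. A set $C\subseteq V(G)$ is a minimal separator of $G$ if there are two distinct connected components $L,R$ of $G\setminus C$ with $N(L)=N(R)=C$, where $N(X)$ is the set of vertices outside $X$ with a neighbor in $X$. A connected component $D$ of $G\setminus C$ is a full component for $C$ if $N(D)=C$. *)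

theory Defs
  imports Main
begin

definition graph :: "'a set \<Rightarrow> ('a \<Rightarrow> 'a \<Rightarrow> bool) \<Rightarrow> bool" where
  "graph V E \<longleftrightarrow> finite V \<and> (\<forall>u v. E u v \<longrightarrow> u \<in> V \<and> v \<in> V)
     \<and> (\<forall>u v. E u v \<longrightarrow> E v u) \<and> (\<forall>u. \<not> E u u)"

definition ind_path :: "'a set \<Rightarrow> ('a \<Rightarrow> 'a \<Rightarrow> bool) \<Rightarrow> 'a list \<Rightarrow> 'a \<Rightarrow> 'a \<Rightarrow> bool" where
  "ind_path V E p a b \<longleftrightarrow> p \<noteq> [] \<and> distinct p \<and> set p \<subseteq> V \<and> hd p = a \<and> last p = b
     \<and> (\<forall>i<length p. \<forall>j<length p. E (p ! i) (p ! j) \<longleftrightarrow> (j = i + 1 \<or> i = j + 1))"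

definition is_hole :: "'a set \<Rightarrow> ('a \<Rightarrow> 'a \<Rightarrow> bool) \<Rightarrow> 'a set \<Rightarrow> bool" where
  "is_hole V E H \<longleftrightarrow> (\<exists>c. distinct c \<and> set c = H \<and> H \<subseteq> V \<and> length c \<ge> 4
     \<and> (\<forall>i<length c. \<forall>j<length c.
          E (c ! i) (c ! j) \<longleftrightarrow> (j = (i + 1) mod length c \<or> i = (j + 1) mod length c)))"

definition has_theta :: "'a set \<Rightarrow> ('a \<Rightarrow> 'a \<Rightarrow> bool) \<Rightarrow> bool" where
  "has_theta V E \<longleftrightarrow> (\<exists>a b P1 P2 P3. a \<noteq> b \<and> \<not> E a b
     \<and> ind_path V E P1 a b \<and> ind_path V E P2 a b \<and> ind_path V E P3 a b
     \<and> set P1 \<inter> set P2 = {a, b} \<and> set P1 \<inter> set P3 = {a, b} \<and> set P2 \<inter> set P3 = {a, b}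
     \<and> is_hole V E (set P1 \<union> set P2) \<and> is_hole V E (set P1 \<union> set P3)
     \<and> is_hole V E (set P2 \<union> set P3))"

definition has_pyramid :: "'a set \<Rightarrow> ('a \<Rightarrow> 'a \<Rightarrow> bool) \<Rightarrow> bool" where
  "has_pyramid V E \<longleftrightarrow> (\<exists>a b1 b2 b3 P1 P2 P3.
     b1 \<noteq> b2 \<and> b1 \<noteq> b3 \<and> b2 \<noteq> b3 \<and> E b1 b2 \<and> E b1 b3 \<and> E b2 b3
     \<and> ind_path V E P1 a b1 \<and> ind_path V E P2 a b2 \<and> ind_path V E P3 a b3
     \<and> set P1 \<inter> set P2 = {a} \<and> set P1 \<inter> set P3 = {a} \<and> set P2 \<inter> set P3 = {a}
     \<and> is_hole V E (set P1 \<union> set P2) \<and> is_hole V E (set P1 \<union> set P3)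
     \<and> is_hole V E (set P2 \<union> set P3))"

definition has_prism :: "'a set \<Rightarrow> ('a \<Rightarrow> 'a \<Rightarrow> bool) \<Rightarrow> bool" where
  "has_prism V E \<longleftrightarrow> (\<exists>a1 a2 a3 b1 b2 b3 P1 P2 P3.
     a1 \<noteq> a2 \<and> a1 \<noteq> a3 \<and> a2 \<noteq> a3 \<and> E a1 a2 \<and> E a1 a3 \<and> E a2 a3
     \<and> b1 \<noteq> b2 \<and> b1 \<noteq> b3 \<and> b2 \<noteq> b3 \<and> E b1 b2 \<and> E b1 b3 \<and> E b2 b3
     \<and> {a1, a2, a3} \<inter> {b1, b2, b3} = {}
     \<and> ind_path V E P1 a1 b1 \<and> ind_path V E P2 a2 b2 \<and> ind_path V E P3 a3 b3
     \<and> set P1 \<inter> set P2 = {} \<and> set P1 \<inter> set P3 = {} \<and> set P2 \<inter> set P3 = {}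
     \<and> is_hole V E (set P1 \<union> set P2) \<and> is_hole V E (set P1 \<union> set P3)
     \<and> is_hole V E (set P2 \<union> set P3))"

definition has_turtle :: "'a set \<Rightarrow> ('a \<Rightarrow> 'a \<Rightarrow> bool) \<Rightarrow> bool" where
  "has_turtle V E \<longleftrightarrow> (\<exists>a1 b1 a2 b2 P1 P2 x y.
     ind_path V E P1 a1 b1 \<and> ind_path V E P2 a2 b2 \<and> set P1 \<inter> set P2 = {}
     \<and> E a1 a2 \<and> E b1 b2 \<and> is_hole V E (set P1 \<union> set P2)
     \<and> x \<in> V \<and> y \<in> V \<and> x \<notin> set P1 \<union> set P2 \<and> y \<notin> set P1 \<union> set P2 \<and> E x y
     \<and> card {v \<in> set P1. E x v} \<ge> 3 \<and> (\<forall>v \<in> set P2. \<not> E x v)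
     \<and> card {v \<in> set P2. E y v} \<ge> 3 \<and> (\<forall>v \<in> set P1. \<not> E y v))"

definition in_class_C :: "'a set \<Rightarrow> ('a \<Rightarrow> 'a \<Rightarrow> bool) \<Rightarrow> bool" where
  "in_class_C V E \<longleftrightarrow> graph V E \<and> \<not> has_theta V E \<and> \<not> has_pyramid V E
     \<and> \<not> has_prism V E \<and> \<not> has_turtle V E"

definition connected_set :: "('a \<Rightarrow> 'a \<Rightarrow> bool) \<Rightarrow> 'a set \<Rightarrow> bool" where
  "connected_set E S \<longleftrightarrow> S \<noteq> {} \<and>
     (\<forall>u\<in>S. \<forall>v\<in>S. (\<lambda>x y. x \<in> S \<and> y \<in> S \<and> E x y)\<^sup>*\<^sup>* u v)"

definition component :: "'a set \<Rightarrow> ('a \<Rightarrow> 'a \<Rightarrow> bool) \<Rightarrow> 'a set \<Rightarrow> 'a set \<Rightarrow> bool" where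
  "component V E X D \<longleftrightarrow> D \<subseteq> V - X \<and> connected_set E D
     \<and> (\<forall>D'. D \<subseteq> D' \<and> D' \<subseteq> V - X \<and> connected_set E D' \<longrightarrow> D' = D)"

definition nbhd :: "'a set \<Rightarrow> ('a \<Rightarrow> 'a \<Rightarrow> bool) \<Rightarrow> 'a set \<Rightarrow> 'a set" where
  "nbhd V E X = {v \<in> V - X. \<exists>u\<in>X. E u v}"

definition minimal_separator :: "'a set \<Rightarrow> ('a \<Rightarrow> 'a \<Rightarrow> bool) \<Rightarrow> 'a set \<Rightarrow> bool" where
  "minimal_separator V E C \<longleftrightarrow> C \<subseteq> V \<and> (\<exists>L R. L \<noteq> R
     \<and> component V E C L \<and> component V E C R \<and> nbhd V E L = C \<and> nbhd V E R = C)"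

definition full_component :: "'a set \<Rightarrow> ('a \<Rightarrow> 'a \<Rightarrow> bool) \<Rightarrow> 'a set \<Rightarrow> 'a set \<Rightarrow> bool" where
  "full_component V E C D \<longleftrightarrow> component V E C D \<and> nbhd V E D = C"

definition is_clique :: "('a \<Rightarrow> 'a \<Rightarrow> bool) \<Rightarrow> 'a set \<Rightarrow> bool" where
  "is_clique E K \<longleftrightarrow> (\<forall>u\<in>K. \<forall>v\<in>K. u \<noteq> v \<longrightarrow> E u v)"

end

theory Submission
  imports Defs
begin

fun cp :: "'a list \<Rightarrow> ('a \<times> 'a) set" where
  "cp (x # y # zs) = insert (x, y) (cp (y # zs))"
| "cp _ = {}"

lemma cp_Cons: "cp (x # xs) = (if xs = [] then {} else insert (x, hd xs) (cp xs))"
  by (cases xs) auto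

lemma cp_append: "cp (xs @ ys) = cp xs \<union> cp ys \<union> (if xs \<noteq> [] \<and> ys \<noteq> [] then {(last xs, hd ys)} else {})"
  by (induction xs) (auto simp: cp_Cons)

lemma cp_rev: "cp (rev xs) = (cp xs)\<inverse>"
  by (induction xs) (auto simp: cp_Cons cp_append hd_rev last_rev)

lemma cp_nth: "(x,y) \<in> cp xs \<longleftrightarrow> (\<exists>i. Suc i < length xs \<and> x = xs!i \<and> y = xs!Suc i)"
proof (induction xs rule: cp.induct)
  case (1 a b zs)
  show ?case
  proof
    assume "(x,y) \<in> cp (a # b # zs)"
    then consider "x = a" "y = b" | "(x,y) \<in> cp (b#zs)" by auto
    then show "\<exists>i. Suc i < length (a#b#zs) \<and> x = (a#b#zs)!i \<and> y = (a#b#zs)!Suc i"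
    proof cases
      case 1 then show ?thesis by (intro exI[of _ 0]) auto
    next
      case 2 then obtain i where "Suc i < length (b#zs)" "x = (b#zs)!i" "y = (b#zs)!Suc i"
        using "1.IH" by auto
      then show ?thesis by (intro exI[of _ "Suc i"]) auto
    qed
  next
    assume "\<exists>i. Suc i < length (a#b#zs) \<and> x = (a#b#zs)!i \<and> y = (a#b#zs)!Suc i"
    then obtain i where i: "Suc i < length (a#b#zs)" "x = (a#b#zs)!i" "y = (a#b#zs)!Suc i" by blast
    show "(x,y) \<in> cp (a # b # zs)"
    proof (cases i)
      case 0 then show ?thesis using i by auto
    next
      case (Suc k) then show ?thesis using i "1.IH" by auto
    qed
  qed
qed auto

lemma cp_set: "(x,y) \<in> cp xs \<Longrightarrow> x \<in> set xs \<and> y \<in> set xs"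
  unfolding cp_nth by auto

lemma cp_take: "cp (take k p) \<subseteq> cp p"
  using cp_append[of "take k p" "drop k p"] by auto
lemma cp_drop: "cp (drop k p) \<subseteq> cp p"
  using cp_append[of "take k p" "drop k p"] by auto

definition walk :: "('a \<Rightarrow> 'a \<Rightarrow> bool) \<Rightarrow> 'a set \<Rightarrow> 'a \<Rightarrow> 'a \<Rightarrow> 'a list \<Rightarrow> bool" where
  "walk E D a b p \<longleftrightarrow> p \<noteq> [] \<and> hd p = a \<and> last p = b \<and> set p \<subseteq> D \<union> {a,b}
     \<and> (\<forall>(x,y)\<in>cp p. E x y)"

lemma last_take': "0 < k \<Longrightarrow> k \<le> length p \<Longrightarrow> last (take k p) = p ! (k - 1)"
  by (metis Suc_diff_1 Suc_le_lessD last_snoc take_Suc_conv_app_nth)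

lemma shortcut:
  assumes w: "walk E D a b p" and k: "0 < k" "k \<le> j" "j < length p"
    and e: "E (p!(k-1)) (p!j)"
  shows "walk E D a b (take k p @ drop j p)"
proof -
  have ne1: "take k p \<noteq> []" using k by auto
  have ne2: "drop j p \<noteq> []" using k by auto
  have "last (take k p) = p!(k-1)" using k by (intro last_take') auto
  moreover have "hd (drop j p) = p!j" using k by (simp add: hd_drop_conv_nth)
  ultimately have "cp (take k p @ drop j p) \<subseteq> cp p \<union> {(p!(k-1), p!j)}"
    using cp_take[of k p] cp_drop[of j p] ne1 ne2 by (auto simp: cp_append)
  moreover have "set (take k p @ drop j p) \<subseteq> set p"
    using set_take_subset set_drop_subset by fastforce
  ultimately show ?thesis using w e k ne1 ne2 unfolding walk_def by (auto simp: hd_append)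
qed

lemma min_walk:
  assumes w: "walk E D a b p" and m: "\<forall>q. walk E D a b q \<longrightarrow> length p \<le> length q"
    and irr: "\<forall>u. \<not> E u u" and sym: "\<forall>u v. E u v \<longrightarrow> E v u"
  shows "distinct p \<and> (\<forall>i<length p. \<forall>j<length p. E (p!i) (p!j) \<longleftrightarrow> (j = i + 1 \<or> i = j + 1))"
proof -
  have pairE: "E (p!i) (p!Suc i)" if "Suc i < length p" for i
  proof -
    have "(p!i, p!Suc i) \<in> cp p" unfolding cp_nth using that by blast
    then show ?thesis using w unfolding walk_def by auto
  qed
  have d: "distinct p"
  proof (rule ccontr)
    assume "\<not> distinct p"
    then obtain i j where ij: "i < j" "j < length p" "p!i = p!j"
      by (metis distinct_conv_nth linorder_neqE_nat)
    show False
    proof (cases i)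
      case 0
      have "walk E D a b (drop j p)"
        using w ij 0 cp_drop[of j p] set_drop_subset[of j p] unfolding walk_def
        by (auto simp: hd_drop_conv_nth hd_conv_nth)
      then show False using m ij by fastforce
    next
      case (Suc i')
      have "E (p!(i-1)) (p!j)" using pairE[of i'] Suc ij by auto
      then have "walk E D a b (take i p @ drop j p)"
        using shortcut[OF w, of i j] Suc ij by auto
      then show False using m ij by fastforce
    qed
  qed
  have ch: "j = i + 1" if "i < j" "j < length p" "E (p!i) (p!j)" for i j
  proof (rule ccontr)
    assume "j \<noteq> i + 1"
    then have "walk E D a b (take (Suc i) p @ drop j p)"
      using shortcut[OF w, of "Suc i" j] that by auto
    then show False using m that \<open>j \<noteq> i + 1\<close> by fastforce
  qed
  have "E (p!i) (p!j) \<longleftrightarrow> (j = i + 1 \<or> i = j + 1)" if "i < length p" "j < length p" for i j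
  proof
    assume e: "E (p!i) (p!j)"
    have "i \<noteq> j" using e irr by auto
    then consider "i < j" | "j < i" by linarith
    then show "j = i + 1 \<or> i = j + 1"
    proof cases
      case 1 then show ?thesis using ch that e by auto
    next
      case 2 then show ?thesis using ch[of j i] that e sym by auto
    qed
  next
    assume "j = i + 1 \<or> i = j + 1"
    then show "E (p!i) (p!j)" using pairE that sym by auto
  qed
  then show ?thesis using d by blast
qed

lemma rtr_list:
  assumes "(\<lambda>x y. x \<in> S \<and> y \<in> S \<and> E x y)\<^sup>*\<^sup>* u w" and "u \<in> S"
  shows "\<exists>p. p \<noteq> [] \<and> hd p = u \<and> last p = w \<and> set p \<subseteq> S \<and> (\<forall>(x,y)\<in>cp p. E x y)"
  using assms
proof (induction rule: rtranclp_induct)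
  case base
  then show ?case by (intro exI[of _ "[u]"]) auto
next
  case (step y z)
  then obtain p where p: "p \<noteq> []" "hd p = u" "last p = y" "set p \<subseteq> S" "\<forall>(x,y)\<in>cp p. E x y"
    by blast
  show ?case using p step.hyps(2)
    by (intro exI[of _ "p @ [z]"]) (auto simp: cp_append)
qed

lemma exists_path:
  assumes g: "graph V E" and c: "component V E C D" and n: "nbhd V E D = C"
    and a: "a \<in> C" and b: "b \<in> C"
  shows "\<exists>p. ind_path V E p a b \<and> set p \<subseteq> D \<union> {a,b}"
proof -
  have sym: "\<forall>u v. E u v \<longrightarrow> E v u" and irr: "\<forall>u. \<not> E u u"
    using g unfolding graph_def by auto
  obtain u where u: "u \<in> D" "E u a" using a n unfolding nbhd_def by auto
  obtain w where w: "w \<in> D" "E w b" using b n unfolding nbhd_def by auto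
  have "(\<lambda>x y. x \<in> D \<and> y \<in> D \<and> E x y)\<^sup>*\<^sup>* u w"
  proof -
    have "connected_set E D" using c unfolding component_def by simp
    then show ?thesis using u w unfolding connected_set_def by simp
  qed
  then obtain p where p: "p \<noteq> []" "hd p = u" "last p = w" "set p \<subseteq> D" "\<forall>(x,y)\<in>cp p. E x y"
    using rtr_list[of D E u w] u(1) by blast
  have "walk E D a b (a # p @ [b])"
    unfolding walk_def using p u w sym by (auto simp: cp_append cp_Cons)
  then obtain q where q: "walk E D a b q" "\<forall>r. walk E D a b r \<longrightarrow> length q \<le> length r"
    using ex_has_least_nat[of "walk E D a b" _ length] by blast
  have "distinct q \<and> (\<forall>i<length q. \<forall>j<length q. E (q!i) (q!j) \<longleftrightarrow> (j = i + 1 \<or> i = j + 1))"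
    using min_walk[OF q irr sym] .
  moreover have "D \<subseteq> V" "C \<subseteq> V" using c n unfolding component_def nbhd_def by auto
  moreover have "set q \<subseteq> D \<union> {a,b}" "q \<noteq> []" "hd q = a" "last q = b"
    using q(1) unfolding walk_def by auto
  moreover have "set q \<subseteq> V" using calculation(2,3,4) a b by blast
  ultimately show ?thesis unfolding ind_path_def by blast
qed

lemma conn_union:
  assumes sym: "\<forall>u v. E u v \<longrightarrow> E v u"
    and A: "connected_set E A" and B: "connected_set E B"
    and br: "A \<inter> B \<noteq> {} \<or> (\<exists>x\<in>A. \<exists>y\<in>B. E x y)"
  shows "connected_set E (A \<union> B)"
proof -
  define R where "R S = (\<lambda>x y. x \<in> S \<and> y \<in> S \<and> E x y)" for S
  have mA: "(R A)\<^sup>*\<^sup>* x y \<Longrightarrow> (R (A \<union> B))\<^sup>*\<^sup>* x y" for x y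
    by (rule rtranclp_mono[THEN predicate2D, rotated]) (auto simp: R_def)
  have mB: "(R B)\<^sup>*\<^sup>* x y \<Longrightarrow> (R (A \<union> B))\<^sup>*\<^sup>* x y" for x y
    by (rule rtranclp_mono[THEN predicate2D, rotated]) (auto simp: R_def)
  have cA: "\<forall>u\<in>A. \<forall>v\<in>A. (R A)\<^sup>*\<^sup>* u v" using A unfolding connected_set_def R_def by blast
  have cB: "\<forall>u\<in>B. \<forall>v\<in>B. (R B)\<^sup>*\<^sup>* u v" using B unfolding connected_set_def R_def by blast
  obtain x y where xy: "x \<in> A" "y \<in> B" "(R (A \<union> B))\<^sup>*\<^sup>* x y" "(R (A \<union> B))\<^sup>*\<^sup>* y x"
  proof (cases "A \<inter> B \<noteq> {}")
    case True
    then obtain z where "z \<in> A" "z \<in> B" by blast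
    then show ?thesis using that[of z z] by auto
  next
    case False
    then obtain x y where "x \<in> A" "y \<in> B" "E x y" using br by blast
    then have "R (A \<union> B) x y" "R (A \<union> B) y x" using sym unfolding R_def by auto
    then show ?thesis using that[of x y] \<open>x \<in> A\<close> \<open>y \<in> B\<close> by blast
  qed
  have "(R (A \<union> B))\<^sup>*\<^sup>* u v" if uv: "u \<in> A \<union> B" "v \<in> A \<union> B" for u v
  proof -
    consider "u \<in> A" "v \<in> A" | "u \<in> A" "v \<in> B" | "u \<in> B" "v \<in> A" | "u \<in> B" "v \<in> B"
      using uv by blast
    then show ?thesis
    proof cases
      case 1 then show ?thesis using cA mA by blast
    next
      case 2
      have "(R (A \<union> B))\<^sup>*\<^sup>* u x" using cA mA 2 xy by blast
      moreover have "(R (A \<union> B))\<^sup>*\<^sup>* y v" using cB mB 2 xy by blast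
      ultimately show ?thesis using xy(3) by (meson rtranclp_trans)
    next
      case 3
      have "(R (A \<union> B))\<^sup>*\<^sup>* u y" using cB mB 3 xy by blast
      moreover have "(R (A \<union> B))\<^sup>*\<^sup>* x v" using cA mA 3 xy by blast
      ultimately show ?thesis using xy(4) by (meson rtranclp_trans)
    next
      case 4 then show ?thesis using cB mB by blast
    qed
  qed
  then show ?thesis using A unfolding connected_set_def R_def by auto
qed

lemma comp_disj:
  assumes g: "graph V E" and c1: "component V E X D1" and c2: "component V E X D2"
    and ne: "D1 \<noteq> D2"
  shows "D1 \<inter> D2 = {} \<and> (\<forall>x\<in>D1. \<forall>y\<in>D2. \<not> E x y)"
proof (rule ccontr)
  assume "\<not> ?thesis"
  then have br: "D1 \<inter> D2 \<noteq> {} \<or> (\<exists>x\<in>D1. \<exists>y\<in>D2. E x y)" by blast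
  have sym: "\<forall>u v. E u v \<longrightarrow> E v u" using g unfolding graph_def by auto
  have cu: "connected_set E (D1 \<union> D2)"
    using conn_union[OF sym _ _ br] c1 c2 unfolding component_def by blast
  have sub: "D1 \<union> D2 \<subseteq> V - X" using c1 c2 unfolding component_def by blast
  have m1: "\<forall>D'. D1 \<subseteq> D' \<and> D' \<subseteq> V - X \<and> connected_set E D' \<longrightarrow> D' = D1"
    using c1 unfolding component_def by blast
  have m2: "\<forall>D'. D2 \<subseteq> D' \<and> D' \<subseteq> V - X \<and> connected_set E D' \<longrightarrow> D' = D2"
    using c2 unfolding component_def by blast
  have "D1 \<union> D2 = D1" using m1 cu sub by (meson Un_upper1)
  moreover have "D1 \<union> D2 = D2" using m2 cu sub by (meson Un_upper2)
  ultimately show False using ne by blast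
qed

lemma cyc_nth:
  assumes d: "distinct c" and i: "i < length c" and j: "j < length c"
  shows "(c!i, c!j) \<in> cp (c @ [hd c]) \<longleftrightarrow> j = (i + 1) mod length c"
proof -
  let ?n = "length c"
  have n0: "0 < ?n" using i by auto
  have f1: "(c @ [hd c])!k = c!k" if "k < ?n" for k using that by (simp add: nth_append)
  have f2: "(c @ [hd c])!Suc k = c!(Suc k mod ?n)" if "k < ?n" for k
  proof (cases "Suc k < ?n")
    case True then show ?thesis by (simp add: nth_append)
  next
    case False then have "Suc k = ?n" using that by auto
    then show ?thesis using n0 by (simp add: nth_append hd_conv_nth)
  qed
  have m: "Suc k mod ?n < ?n" for k using n0 by auto
  show ?thesis
  proof
    assume "(c!i, c!j) \<in> cp (c @ [hd c])"
    then obtain k where k: "Suc k < length (c @ [hd c])" "c!i = (c @ [hd c])!k" "c!j = (c @ [hd c])!Suc k"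
      unfolding cp_nth by blast
    have kn: "k < ?n" using k(1) by auto
    have "c!i = c!k" using k(2) f1[OF kn] by simp
    then have "i = k" using d i kn nth_eq_iff_index_eq by blast
    have "c!j = c!(Suc k mod ?n)" using k(3) f2[OF kn] by simp
    then have "j = Suc k mod ?n" using d j m nth_eq_iff_index_eq by blast
    then show "j = (i + 1) mod ?n" using \<open>i = k\<close> by simp
  next
    assume "j = (i + 1) mod ?n"
    then show "(c!i, c!j) \<in> cp (c @ [hd c])"
      unfolding cp_nth using f1[OF i] f2[OF i] i
      by (intro exI[of _ i]) auto
  qed
qed

lemma cyc_hole:
  assumes d: "distinct c" and l: "length c \<ge> 4" and s: "set c \<subseteq> V"
    and h: "\<forall>x\<in>set c. \<forall>y\<in>set c. E x y \<longleftrightarrow> ((x,y) \<in> cp (c @ [hd c]) \<or> (y,x) \<in> cp (c @ [hd c]))"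
  shows "is_hole V E (set c)"
  unfolding is_hole_def
proof (intro exI[of _ c] conjI allI impI)
  fix i j assume i: "i < length c" and j: "j < length c"
  have "E (c!i) (c!j) \<longleftrightarrow> ((c!i, c!j) \<in> cp (c @ [hd c]) \<or> (c!j, c!i) \<in> cp (c @ [hd c]))"
    using h i j by simp
  then show "E (c!i) (c!j) \<longleftrightarrow> (j = (i + 1) mod length c \<or> i = (j + 1) mod length c)"
    using cyc_nth[OF d i j] cyc_nth[OF d j i] by simp
qed (use d l s in auto)

lemma ind_cp_E: "ind_path V E p a b \<Longrightarrow> (x,y) \<in> cp p \<Longrightarrow> E x y"
  unfolding cp_nth ind_path_def by auto

lemma ind_E_cp:
  assumes "ind_path V E p a b" "x \<in> set p" "y \<in> set p" "E x y"
  shows "(x,y) \<in> cp p \<or> (y,x) \<in> cp p"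
proof -
  obtain i where i: "i < length p" "x = p!i" using assms(2) by (auto simp: in_set_conv_nth)
  obtain j where j: "j < length p" "y = p!j" using assms(3) by (auto simp: in_set_conv_nth)
  have "j = i + 1 \<or> i = j + 1" using assms(1,4) i j unfolding ind_path_def by blast
  then show ?thesis unfolding cp_nth using i j by auto
qed

lemma ind_shape:
  assumes p: "ind_path V E p a b" and ab: "a \<noteq> b" "\<not> E a b"
  shows "\<exists>M. M \<noteq> [] \<and> p = a # M @ [b]"
proof -
  have pne: "p \<noteq> []" and hp: "hd p = a" and lp: "last p = b"
    and adj: "\<forall>i<length p. \<forall>j<length p. E (p ! i) (p ! j) \<longleftrightarrow> (j = i + 1 \<or> i = j + 1)"
    using p unfolding ind_path_def by blast+
  obtain ys where p1: "p = a # ys" using pne hp by (cases p) auto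
  have ys: "ys \<noteq> []" using p1 hp lp ab by auto
  have lb: "last ys = b" using p1 ys lp by simp
  show ?thesis
  proof (cases "tl ys = []")
    case True
    then have "ys = [b]" using ys lb by (cases ys) auto
    then have p2: "p = [a, b]" using p1 by simp
    have "(0::nat) < length p" "(1::nat) < length p" using p2 by auto
    then have "E (p!0) (p!1) \<longleftrightarrow> ((1::nat) = 0 + 1 \<or> (0::nat) = 1 + 1)" using adj[rule_format, of 0 1] by simp
    then have "E (p!0) (p!1)" by simp
    then have "E a b" using p2 by simp
    then show ?thesis using ab by simp
  next
    case False
    have "ys = butlast ys @ [b]" using ys lb by (metis append_butlast_last_id)
    moreover have "butlast ys \<noteq> []" using False ys by (cases ys) auto
    ultimately show ?thesis using p1 by metis
  qed
qed

lemma hole: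
  assumes g: "graph V E" and P: "ind_path V E P a b" and Q: "ind_path V E Q a b"
    and ab: "a \<noteq> b" "\<not> E a b" and inter: "set P \<inter> set Q = {a,b}"
    and ne: "\<forall>x\<in>set P - {a,b}. \<forall>y\<in>set Q - {a,b}. \<not> E x y"
  shows "is_hole V E (set P \<union> set Q)"
proof -
  have sym: "\<forall>u v. E u v \<longrightarrow> E v u" using g unfolding graph_def by auto
  obtain M1 where M1: "M1 \<noteq> []" "P = a # M1 @ [b]" using ind_shape[OF P ab] by blast
  obtain M where M: "M \<noteq> []" "Q = a # M @ [b]" using ind_shape[OF Q ab] by blast
  define c where "c = P @ rev M"
  have dP: "distinct P" and dQ: "distinct Q" using P Q unfolding ind_path_def by auto
  have dM: "distinct M" "a \<notin> set M" "b \<notin> set M" using dQ M by auto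
  have PM: "set P \<inter> set M = {}" using inter M dM by auto
  have dc: "distinct c" unfolding c_def using dP dM PM by auto
  have lc: "length c \<ge> 4" proof -
    have "length M1 \<ge> 1" "length M \<ge> 1" using M1(1) M(1) by (auto simp: Suc_le_eq)
    then show ?thesis unfolding c_def using M1(2) by simp
  qed
  have sc: "set c = set P \<union> set Q" unfolding c_def using M M1 by auto
  have sV: "set c \<subseteq> V" using sc P Q unfolding ind_path_def by auto
  have hc: "hd c = a" unfolding c_def by (simp add: M1(2))
  have ce: "c @ [hd c] = P @ rev (a # M)" unfolding hc by (simp add: c_def)
  have lastP: "last P = b" by (simp add: M1(2))
  have cpc: "cp (c @ [hd c]) = cp P \<union> (cp (a # M))\<inverse> \<union> {(b, last M)}"
    unfolding ce cp_append cp_rev using M M1 by (simp add: hd_rev)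
  have cpQ: "cp Q = cp (a # M) \<union> {(last M, b)}"
    unfolding M(2) using cp_append[of "a # M" "[b]"] M by simp
  have U: "((x,y) \<in> cp (c @ [hd c]) \<or> (y,x) \<in> cp (c @ [hd c])) \<longleftrightarrow>
      ((x,y) \<in> cp P \<or> (y,x) \<in> cp P \<or> (x,y) \<in> cp Q \<or> (y,x) \<in> cp Q)" for x y
    unfolding cpc cpQ by auto
  have "E x y \<longleftrightarrow> ((x,y) \<in> cp (c @ [hd c]) \<or> (y,x) \<in> cp (c @ [hd c]))"
    if x: "x \<in> set c" and y: "y \<in> set c" for x y
  proof
    assume e: "E x y"
    have "(x,y) \<in> cp P \<or> (y,x) \<in> cp P \<or> (x,y) \<in> cp Q \<or> (y,x) \<in> cp Q"
    proof (cases "x \<in> set P \<and> y \<in> set P")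
      case True then show ?thesis using ind_E_cp[OF P _ _ e] by blast
    next
      case F1: False
      show ?thesis
      proof (cases "x \<in> set Q \<and> y \<in> set Q")
        case True then show ?thesis using ind_E_cp[OF Q _ _ e] by blast
      next
        case False
        then have "(x \<in> set P - {a,b} \<and> y \<in> set Q - {a,b}) \<or> (y \<in> set P - {a,b} \<and> x \<in> set Q - {a,b})"
          using F1 x y sc inter by auto
        then show ?thesis using ne e sym by blast
      qed
    qed
    then show "(x,y) \<in> cp (c @ [hd c]) \<or> (y,x) \<in> cp (c @ [hd c])" using U by blast
  next
    assume "(x,y) \<in> cp (c @ [hd c]) \<or> (y,x) \<in> cp (c @ [hd c])"
    then have "(x,y) \<in> cp P \<or> (y,x) \<in> cp P \<or> (x,y) \<in> cp Q \<or> (y,x) \<in> cp Q" using U by blast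
    then show "E x y" using ind_cp_E[OF P] ind_cp_E[OF Q] sym by blast
  qed
  then have "is_hole V E (set c)" using cyc_hole[OF dc lc sV] by blast
  then show ?thesis using sc by simp
qed

lemma pair_hole:
  assumes g: "graph V E" and c1: "component V E C D1" and c2: "component V E C D2"
    and ne: "D1 \<noteq> D2" and a: "a \<in> C" and b: "b \<in> C" and ab: "a \<noteq> b" "\<not> E a b"
    and P1: "ind_path V E P1 a b" and P2: "ind_path V E P2 a b"
    and s1: "set P1 \<subseteq> D1 \<union> {a,b}" and s2: "set P2 \<subseteq> D2 \<union> {a,b}"
  shows "set P1 \<inter> set P2 = {a,b} \<and> is_hole V E (set P1 \<union> set P2)"
proof -
  have dj: "D1 \<inter> D2 = {}" and nE: "\<forall>x\<in>D1. \<forall>y\<in>D2. \<not> E x y"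
    using comp_disj[OF g c1 c2 ne] by auto
  have abP1: "a \<in> set P1" "b \<in> set P1" using P1 unfolding ind_path_def
    by (auto intro: hd_in_set last_in_set)
  have abP2: "a \<in> set P2" "b \<in> set P2" using P2 unfolding ind_path_def
    by (auto intro: hd_in_set last_in_set)
  have i: "set P1 \<inter> set P2 = {a,b}" using s1 s2 dj abP1 abP2 by blast
  have "\<forall>x\<in>set P1 - {a,b}. \<forall>y\<in>set P2 - {a,b}. \<not> E x y" using s1 s2 nE by blast
  then show ?thesis using hole[OF g P1 P2 ab i] i by blast
qed

theorem lemma3p2:
  fixes V :: "'a set" and E :: "'a \<Rightarrow> 'a \<Rightarrow> bool" and C :: "'a set"
  assumes "in_class_C V E"
    and "minimal_separator V E C"
    and "\<not> is_clique E C"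
  shows "card {D. full_component V E C D} = 2"
proof -
  have g: "graph V E" and nt: "\<not> has_theta V E" using assms(1) unfolding in_class_C_def by auto
  obtain L R where LR: "L \<noteq> R" "component V E C L" "component V E C R"
      "nbhd V E L = C" "nbhd V E R = C"
    using assms(2) unfolding minimal_separator_def by blast
  obtain a b where ab: "a \<in> C" "b \<in> C" "a \<noteq> b" "\<not> E a b"
    using assms(3) unfolding is_clique_def by blast
  have "{D. full_component V E C D} = {L, R}"
  proof
    show "{L, R} \<subseteq> {D. full_component V E C D}" using LR unfolding full_component_def by auto
  next
    show "{D. full_component V E C D} \<subseteq> {L, R}"
    proof
      fix D assume "D \<in> {D. full_component V E C D}"
      then have D: "component V E C D" "nbhd V E D = C" unfolding full_component_def by auto
      show "D \<in> {L, R}"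
      proof (rule ccontr)
        assume "D \<notin> {L, R}"
        then have DL: "D \<noteq> L" and DR: "D \<noteq> R" by auto
        obtain P1 where P1: "ind_path V E P1 a b" "set P1 \<subseteq> L \<union> {a,b}"
          using exists_path[OF g LR(2) LR(4) ab(1,2)] by blast
        obtain P2 where P2: "ind_path V E P2 a b" "set P2 \<subseteq> R \<union> {a,b}"
          using exists_path[OF g LR(3) LR(5) ab(1,2)] by blast
        obtain P3 where P3: "ind_path V E P3 a b" "set P3 \<subseteq> D \<union> {a,b}"
          using exists_path[OF g D ab(1,2)] by blast
        have h12: "set P1 \<inter> set P2 = {a,b} \<and> is_hole V E (set P1 \<union> set P2)"
          using pair_hole[OF g LR(2) LR(3) LR(1) ab P1(1) P2(1) P1(2) P2(2)] .
        have h13: "set P1 \<inter> set P3 = {a,b} \<and> is_hole V E (set P1 \<union> set P3)"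
          using pair_hole[OF g LR(2) D(1) DL[symmetric] ab P1(1) P3(1) P1(2) P3(2)] .
        have h23: "set P2 \<inter> set P3 = {a,b} \<and> is_hole V E (set P2 \<union> set P3)"
          using pair_hole[OF g LR(3) D(1) DR[symmetric] ab P2(1) P3(1) P2(2) P3(2)] .
        have "has_theta V E" unfolding has_theta_def
          using ab(3,4) P1(1) P2(1) P3(1) h12 h13 h23 by blast
        then show False using nt by simp
      qed
    qed
  qed
  then show ?thesis using LR(1) by simp
qed

end
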